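(* Let $P(\lambda)=\sum_{j=0}^m A_j\lambda^j$ be an $n\times n$ complex matrix polynomial with $\det A_m\neq0$, let $\mu_1\neq\mu_2$ be complex numbers, let $w=\{\omega_0,\dots,\omega_m\}$ be nonnegative weights with $\omega_0>0$, and suppose that the function $\gamma\mapsto s_{2n-1}(F[P(\mu_1,\mu_2);\gamma])$, $\gamma\ge0$ real, attains its maximum at $\gamma_*=0$. For $i=1,2$ let $u_i,v_i\in\mathbb{C}^n$ be a pair of unit left and right singular vectors of $P(\mu_i)$ corresponding to $\sigma_i=s_n(P(\mu_i))$, i.e. $P(\mu_i)v_i=\sigma_iu_i$, and suppose $v_1,v_2$ are linearly independent. Define $$\Delta_0=-[u_1\ u_2]\begin{bmatrix}\sigma_1&0\\0&\sigma_2\end{bmatrix}[v_1\ v_2]^{\dagger},\qquad Q_0(\lambda)=A_m\lambda^m+\dots+A_1\lambda+(A_0+\Delta_0),$$ where $[v_1\ v_2]^\dagger$ is the Moore–Penrose pseudoinverse. Then $Q_0$ lies on the boundary of $\mathcal{B}(P,\|\Delta_0\|/\omega_0,w)$, and $\mu_1,\mu_2$ are eigenvalues of $Q_0$ with eigenvectors $v_1,v_2$ respectively.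
   Context: $\|\cdot\|$ is the spectral norm. For $\varepsilon\ge0$, $\mathcal{B}(P,\varepsilon,w)$ is the set of matrix polynomials $\sum_{j=0}^m(A_j+\Delta_j)\lambda^j$ with $\Delta_j\in\mathbb{C}^{n\times n}$ and $\|\Delta_j\|\le\varepsilon\omega_j$ for all $j$; its boundary consists of those members for which $\|\Delta_j\|=\varepsilon\omega_j$ for some $j$. $P[\mu_1,\mu_2]=\frac{P(\mu_1)-P(\mu_2)}{\mu_1-\mu_2}$, $F[P(\mu_1,\mu_2);\gamma]=\begin{bmatrix} P(\mu_1) & 0\\ \gamma P[\mu_1,\mu_2] & P(\mu_2)\end{bmatrix}$. Singular values are ordered decreasingly, so $s_n(M)$ is the smallest singular value of an $n\times n$ matrix $M$ and $s_{2n-1}$ the second smallest of a $2n\times2n$ matrix. *)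

theory Defs
  imports "Jordan_Normal_Form.Schur_Decomposition" "Jordan_Normal_Form.Char_Poly"
begin

definition vnorm :: "complex vec \<Rightarrow> real" where
  "vnorm v = sqrt (\<Sum>i<dim_vec v. (cmod (v $ i))\<^sup>2)"

definition spec_norm :: "complex mat \<Rightarrow> real" where
  "spec_norm M = Sup {vnorm (M *\<^sub>v x) | x. x \<in> carrier_vec (dim_col M) \<and> vnorm x = 1}"

definition sing_vals :: "complex mat \<Rightarrow> real list" where
  "sing_vals M = (THE ls. length ls = dim_col M \<and> sorted_wrt (\<ge>) ls \<and> (\<forall>s\<in>set ls. 0 \<le> s) \<and>
      char_poly (mat_adjoint M * M) = prod_list (map (\<lambda>s. [:- complex_of_real (s\<^sup>2), 1:]) ls))"

(* s_k(M), the k-th largest singular value (k counted from 1) *)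
definition sval :: "complex mat \<Rightarrow> nat \<Rightarrow> real" where
  "sval M k = sing_vals M ! (k - 1)"

fun mp_eval :: "(nat \<Rightarrow> complex mat) \<Rightarrow> nat \<Rightarrow> complex \<Rightarrow> complex mat" where
  "mp_eval A 0 z = A 0"
| "mp_eval A (Suc j) z = mp_eval A j z + (z ^ Suc j) \<cdot>\<^sub>m A (Suc j)"

definition mp_divdiff :: "(nat \<Rightarrow> complex mat) \<Rightarrow> nat \<Rightarrow> complex \<Rightarrow> complex \<Rightarrow> complex mat" where
  "mp_divdiff A m \<mu>1 \<mu>2 = (1 / (\<mu>1 - \<mu>2)) \<cdot>\<^sub>m (mp_eval A m \<mu>1 - mp_eval A m \<mu>2)"

definition Fmat :: "nat \<Rightarrow> (nat \<Rightarrow> complex mat) \<Rightarrow> nat \<Rightarrow> complex \<Rightarrow> complex \<Rightarrow> real \<Rightarrow> complex mat" where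
  "Fmat n A m \<mu>1 \<mu>2 \<gamma> = four_block_mat (mp_eval A m \<mu>1) (0\<^sub>m n n)
      (complex_of_real \<gamma> \<cdot>\<^sub>m mp_divdiff A m \<mu>1 \<mu>2) (mp_eval A m \<mu>2)"

definition pinv :: "complex mat \<Rightarrow> complex mat" where
  "pinv M = (THE X. X \<in> carrier_mat (dim_col M) (dim_row M) \<and> M * X * M = M \<and> X * M * X = X \<and>
      mat_adjoint (M * X) = M * X \<and> mat_adjoint (X * M) = X * M)"

definition in_mp_ball :: "nat \<Rightarrow> nat \<Rightarrow> (nat \<Rightarrow> complex mat) \<Rightarrow> real \<Rightarrow> (nat \<Rightarrow> real) \<Rightarrow> (nat \<Rightarrow> complex mat) \<Rightarrow> bool" where
  "in_mp_ball n m A \<epsilon> w Q = (\<forall>j\<le>m. \<exists>\<Delta>. \<Delta> \<in> carrier_mat n n \<and> spec_norm \<Delta> \<le> \<epsilon> * w j \<and> Q j = A j + \<Delta>)"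

definition on_mp_ball_boundary :: "nat \<Rightarrow> nat \<Rightarrow> (nat \<Rightarrow> complex mat) \<Rightarrow> real \<Rightarrow> (nat \<Rightarrow> real) \<Rightarrow> (nat \<Rightarrow> complex mat) \<Rightarrow> bool" where
  "on_mp_ball_boundary n m A \<epsilon> w Q = (\<exists>\<Delta>. (\<forall>j\<le>m. \<Delta> j \<in> carrier_mat n n \<and> spec_norm (\<Delta> j) \<le> \<epsilon> * w j \<and> Q j = A j + \<Delta> j)
      \<and> (\<exists>j\<le>m. spec_norm (\<Delta> j) = \<epsilon> * w j))"

definition perturb0 :: "(nat \<Rightarrow> complex mat) \<Rightarrow> complex mat \<Rightarrow> nat \<Rightarrow> complex mat" where
  "perturb0 A D = (\<lambda>j. if j = 0 then A 0 + D else A j)"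

definition mp_eigenpair :: "nat \<Rightarrow> nat \<Rightarrow> (nat \<Rightarrow> complex mat) \<Rightarrow> complex \<Rightarrow> complex vec \<Rightarrow> bool" where
  "mp_eigenpair n m Q \<mu> v = (det (mp_eval Q m \<mu>) = 0 \<and> v \<in> carrier_vec n \<and> v \<noteq> 0\<^sub>v n \<and>
      mp_eval Q m \<mu> *\<^sub>v v = 0\<^sub>v n)"

end

theory Submission
  imports Defs
begin


lemma adj_carrier[simp]: "mat_adjoint A \<in> carrier_mat (dim_col A) (dim_row A)"
  unfolding mat_adjoint_def by auto
lemma adj_dims[simp]: "dim_row (mat_adjoint A) = dim_col A" "dim_col (mat_adjoint A) = dim_row A"
  unfolding mat_adjoint_def by auto
lemma adj_index[simp]: "i < dim_col A \<Longrightarrow> j < dim_row A \<Longrightarrow> mat_adjoint A $$ (i,j) = cnj (A $$ (j,i))"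
  unfolding mat_adjoint_def by (auto simp: mat_of_rows_index)

lemma adj_mult: fixes A B :: "complex mat"
  assumes A: "A \<in> carrier_mat a b" and B: "B \<in> carrier_mat b c"
  shows "mat_adjoint (A * B) = mat_adjoint B * mat_adjoint A"
  apply (rule eq_matI)
  using A B by (auto simp: scalar_prod_def cnj_sum mult.commute intro!: sum.cong)

lemma adj_adj: fixes A :: "complex mat" shows "mat_adjoint (mat_adjoint A) = A"
  by (rule eq_matI) auto

lemma adj_one: "mat_adjoint (1\<^sub>m k :: complex mat) = 1\<^sub>m k"
  by (rule eq_matI) auto



lemma gram_inj: fixes V :: "complex mat"
  assumes V: "V \<in> carrier_mat n k" and inj: "\<forall>c\<in>carrier_vec k. V *\<^sub>v c = 0\<^sub>v n \<longrightarrow> c = 0\<^sub>v k"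
  and c: "c \<in> carrier_vec k" and G: "(mat_adjoint V * V) *\<^sub>v c = 0\<^sub>v k"
  shows "c = 0\<^sub>v k"
proof -
  define y where "y = V *\<^sub>v c"
  have y: "y \<in> carrier_vec n" using V c y_def by auto
  have 1: "mat_adjoint V *\<^sub>v y = 0\<^sub>v k" using G V c y_def
    by (metis adj_carrier assoc_mult_mat_vec carrier_matD(1))
  have yi: "\<And>i. i < n \<Longrightarrow> y $ i = (\<Sum>j\<in>{0..<k}. V $$ (i,j) * c $ j)"
    using V c unfolding y_def by (auto simp: scalar_prod_def)
  have ai: "\<And>j. j < k \<Longrightarrow> (mat_adjoint V *\<^sub>v y) $ j = (\<Sum>i\<in>{0..<n}. cnj (V $$ (i,j)) * y $ i)"
    using V y by (auto simp: scalar_prod_def)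
  have "y \<bullet> conjugate y = (\<Sum>i\<in>{0..<n}. y $ i * cnj (y $ i))"
    using y by (auto simp: scalar_prod_def)
  also have "\<dots> = (\<Sum>i\<in>{0..<n}. (\<Sum>j\<in>{0..<k}. cnj (c $ j) * (cnj (V $$ (i,j)) * y $ i)))"
    by (rule sum.cong[OF refl]) (auto simp: yi cnj_sum sum_distrib_left mult.commute mult.left_commute intro!: sum.cong)
  also have "\<dots> = (\<Sum>j\<in>{0..<k}. cnj (c $ j) * (mat_adjoint V *\<^sub>v y) $ j)"
    by (subst sum.swap) (auto simp: ai sum_distrib_left)
  also have "\<dots> = 0" using 1 by auto
  finally have "y = 0\<^sub>v n" using y conjugate_square_eq_0_vec by blast
  thus ?thesis using inj c y_def by auto
qed



lemma left_inv: fixes V X :: "complex mat"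
  assumes V: "V \<in> carrier_mat n k" and inj: "\<forall>c\<in>carrier_vec k. V *\<^sub>v c = 0\<^sub>v n \<longrightarrow> c = 0\<^sub>v k"
  and X: "X \<in> carrier_mat k n" and e: "V * X * V = V"
  shows "X * V = 1\<^sub>m k"
proof (rule eq_matI)
  fix i j assume i: "i < dim_row (1\<^sub>m k)" and j: "j < dim_col (1\<^sub>m k)"
  hence i: "i < k" and j: "j < k" by auto
  have XV: "X * V \<in> carrier_mat k k" using X V by auto
  have "V *\<^sub>v col (X * V) j = col (V * (X * V)) j" using col_mult2[OF V XV j] by simp
  also have "V * (X * V) = V" using e V X by (metis assoc_mult_mat)
  also have "col V j = V *\<^sub>v unit_vec k j" using V j col_mult2[of V n k "1\<^sub>m k" k j] by simp
  finally have "V *\<^sub>v (col (X * V) j - unit_vec k j) = 0\<^sub>v n"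
    using V XV j by (simp add: mult_minus_distrib_mat_vec)
  hence "col (X * V) j - unit_vec k j = 0\<^sub>v k" using inj XV j by auto
  hence "col (X * V) j = unit_vec k j" using XV j
  proof -
    assume h: "col (X * V) j - unit_vec k j = 0\<^sub>v k"
    show ?thesis
    proof (rule eq_vecI)
      fix i assume "i < dim_vec (unit_vec k j)"
      hence "i < k" by simp
      thus "col (X * V) j $ i = unit_vec k j $ i"
        using arg_cong[OF h, of "\<lambda>v. v $ i"] XV j by simp
    qed (use XV X in simp)
  qed
  hence "col (X * V) j $ i = unit_vec k j $ i" by simp
  thus "(X * V) $$ (i, j) = 1\<^sub>m k $$ (i, j)" using XV i j X V by auto
qed (use X V in auto)



definition MPc :: "complex mat \<Rightarrow> complex mat \<Rightarrow> bool" where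
  "MPc M X = (X \<in> carrier_mat (dim_col M) (dim_row M) \<and> M * X * M = M \<and> X * M * X = X \<and>
      mat_adjoint (M * X) = M * X \<and> mat_adjoint (X * M) = X * M)"

lemma MP_unique: fixes V X Y :: "complex mat"
  assumes V: "V \<in> carrier_mat n k" and inj: "\<forall>c\<in>carrier_vec k. V *\<^sub>v c = 0\<^sub>v n \<longrightarrow> c = 0\<^sub>v k"
  and X: "MPc V X" and Y: "MPc V Y"
  shows "X = Y"
proof -
  have Xc: "X \<in> carrier_mat k n" and Yc: "Y \<in> carrier_mat k n" using X Y V unfolding MPc_def by auto
  have XV: "X * V = 1\<^sub>m k" using left_inv[OF V inj Xc] X unfolding MPc_def by auto
  have YV: "Y * V = 1\<^sub>m k" using left_inv[OF V inj Yc] Y unfolding MPc_def by auto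
  have hX: "mat_adjoint (V * X) = V * X" and hY: "mat_adjoint (V * Y) = V * Y"
   and VYV: "V * Y * V = V" and XVX: "X * V * X = X"
    using X Y unfolding MPc_def by auto
  have "V * X = mat_adjoint X * mat_adjoint V"
    using hX adj_mult[OF V Xc] by simp
  also have "mat_adjoint V = mat_adjoint (V * Y * V)" using VYV by simp
  also have "\<dots> = mat_adjoint V * mat_adjoint (V * Y)"
    using adj_mult[of "V * Y" n n V k] V Yc by simp
  also have "\<dots> = mat_adjoint V * (V * Y)" using hY by simp
  also have "mat_adjoint X * (mat_adjoint V * (V * Y)) = (mat_adjoint X * mat_adjoint V) * (V * Y)"
    by (rule assoc_mult_mat[symmetric, of _ n k _ n _ n]) (use V Xc Yc in auto)
  also have "mat_adjoint X * mat_adjoint V = V * X" using hX adj_mult[OF V Xc] by simp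
  also have "V * X * (V * Y) = V * (X * (V * Y))"
    using assoc_mult_mat[OF V Xc, of "V*Y" n] V Yc by auto
  also have "X * (V * Y) = (X * V) * Y" using assoc_mult_mat[OF Xc V Yc] by simp
  also have "V * ((X * V) * Y) = V * Y" using XV Yc by simp
  finally have VX: "V * X = V * Y" .
  have "X = X * (V * X)" using XVX assoc_mult_mat[OF Xc V Xc] by simp
  also have "\<dots> = X * V * Y" using VX assoc_mult_mat[OF Xc V Yc] by simp
  also have "\<dots> = Y" using XV Yc by simp
  finally show ?thesis .
qed

lemma MP_exists: fixes V :: "complex mat"
  assumes V: "V \<in> carrier_mat n k" and inj: "\<forall>c\<in>carrier_vec k. V *\<^sub>v c = 0\<^sub>v n \<longrightarrow> c = 0\<^sub>v k"
  shows "\<exists>X. MPc V X"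
proof -
  define G where "G = mat_adjoint V * V"
  have Gc: "G \<in> carrier_mat k k" using V G_def by auto
  have "det G \<noteq> 0"
  proof
    assume "det G = 0"
    then obtain c where c: "c \<in> carrier_vec k" "c \<noteq> 0\<^sub>v k" "G *\<^sub>v c = 0\<^sub>v k"
      using det_0_iff_vec_prod_zero[OF Gc] by auto
    thus False using gram_inj[OF V inj c(1)] G_def by auto
  qed
  hence U: "G \<in> Units (ring_mat TYPE(complex) k k)" using det_non_zero_imp_unit[OF Gc] by auto
  obtain B where "mat_inverse G = Some B" using mat_inverse(1)[OF Gc, where b=k] U by (cases "mat_inverse G") auto
  hence GB: "G * B = 1\<^sub>m k" and BG: "B * G = 1\<^sub>m k" and Bc: "B \<in> carrier_mat k k"
    using mat_inverse(2)[OF Gc] by auto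
  have adjG: "mat_adjoint G = G" unfolding G_def using adj_mult[of "mat_adjoint V" k n V k] V adj_carrier[of V]
    by (simp add: adj_adj)
  have "mat_adjoint B * G = mat_adjoint (G * B)"
    using adj_mult[OF Gc Bc] adjG by simp
  also have "\<dots> = 1\<^sub>m k" using GB adj_one by simp
  finally have aBG: "mat_adjoint B * G = 1\<^sub>m k" .
  have aBc: "mat_adjoint B \<in> carrier_mat k k" using Bc by auto
  have adjB: "mat_adjoint B = B"
  proof -
    have "mat_adjoint B = mat_adjoint B * (G * B)" using GB right_mult_one_mat[OF aBc] by simp
    also have "\<dots> = (mat_adjoint B * G) * B" using assoc_mult_mat[OF aBc Gc Bc] by simp
    also have "\<dots> = B" using aBG Bc by simp
    finally show ?thesis .
  qed
  define X where "X = B * mat_adjoint V"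
  have aV: "mat_adjoint V \<in> carrier_mat k n" using V by auto
  have Xc: "X \<in> carrier_mat k n" using X_def Bc aV by auto
  have XV: "X * V = 1\<^sub>m k" unfolding X_def using BG assoc_mult_mat[OF Bc aV V] G_def by simp
  have 1: "V * X * V = V" using XV V assoc_mult_mat[OF V Xc V] by simp
  have 2: "X * V * X = X" using XV Xc by simp
  have 3: "mat_adjoint (X * V) = X * V" using XV adj_one by simp
  have "mat_adjoint (V * X) = mat_adjoint X * mat_adjoint V" using adj_mult[OF V Xc] .
  also have "mat_adjoint X = mat_adjoint (mat_adjoint V) * mat_adjoint B"
    unfolding X_def using adj_mult[OF Bc aV] .
  also have "\<dots> = V * B" using adjB adj_adj by simp
  also have "V * B * mat_adjoint V = V * X" unfolding X_def using assoc_mult_mat[OF V Bc aV] by simp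
  finally have 4: "mat_adjoint (V * X) = V * X" .
  show ?thesis unfolding MPc_def using Xc V 1 2 3 4 by (intro exI[of _ X]) auto
qed

lemma pinv_full: fixes V :: "complex mat"
  assumes V: "V \<in> carrier_mat n k" and inj: "\<forall>c\<in>carrier_vec k. V *\<^sub>v c = 0\<^sub>v n \<longrightarrow> c = 0\<^sub>v k"
  shows "pinv V \<in> carrier_mat k n \<and> pinv V * V = 1\<^sub>m k"
proof -
  have ex1: "\<exists>!X. MPc V X" using MP_exists[OF V inj] MP_unique[OF V inj] by blast
  have "MPc V (pinv V)" unfolding pinv_def using theI'[OF ex1] unfolding MPc_def by simp
  thus ?thesis using left_inv[OF V inj] V unfolding MPc_def by auto
qed



lemma indep_inj: fixes v1 v2 :: "complex vec"
  assumes v1: "v1 \<in> carrier_vec n" and v2: "v2 \<in> carrier_vec n"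
  and indep: "\<forall>a b :: complex. a \<cdot>\<^sub>v v1 + b \<cdot>\<^sub>v v2 = 0\<^sub>v n \<longrightarrow> a = 0 \<and> b = 0"
  shows "\<forall>c\<in>carrier_vec 2. mat_of_cols n [v1, v2] *\<^sub>v c = 0\<^sub>v n \<longrightarrow> c = 0\<^sub>v 2"
proof (intro ballI impI)
  fix c :: "complex vec" assume c: "c \<in> carrier_vec 2" and h: "mat_of_cols n [v1, v2] *\<^sub>v c = 0\<^sub>v n"
  have "mat_of_cols n [v1, v2] *\<^sub>v c = (c $ 0) \<cdot>\<^sub>v v1 + (c $ 1) \<cdot>\<^sub>v v2"
    using c v1 v2 by (intro eq_vecI) (auto simp: scalar_prod_def mat_of_cols_index mult.commute numeral_2_eq_2)
  hence "c $ 0 = 0 \<and> c $ 1 = 0" using h indep by auto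
  thus "c = 0\<^sub>v 2" using c
    by (intro eq_vecI) (auto simp: less_2_cases_iff)
qed

lemma moc2: "mat_of_cols n [a, b] \<in> carrier_mat n 2"
  using mat_of_cols_carrier(1)[of n "[a,b]"] by (simp add: numeral_2_eq_2)

lemma key_action: fixes u1 u2 v1 v2 :: "complex vec"
  assumes u1: "u1 \<in> carrier_vec n" and u2: "u2 \<in> carrier_vec n"
  and v1: "v1 \<in> carrier_vec n" and v2: "v2 \<in> carrier_vec n"
  and inj: "\<forall>c\<in>carrier_vec 2. mat_of_cols n [v1, v2] *\<^sub>v c = 0\<^sub>v n \<longrightarrow> c = 0\<^sub>v 2"
  shows "(mat_of_cols n [u1, u2] * mat_diag 2 f * pinv (mat_of_cols n [v1, v2])) *\<^sub>v v1 = f 0 \<cdot>\<^sub>v u1"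
    "(mat_of_cols n [u1, u2] * mat_diag 2 f * pinv (mat_of_cols n [v1, v2])) *\<^sub>v v2 = f 1 \<cdot>\<^sub>v u2"
    "mat_of_cols n [u1, u2] * mat_diag 2 f * pinv (mat_of_cols n [v1, v2]) \<in> carrier_mat n n"
proof -
  define Vm where "Vm = mat_of_cols n [v1, v2]"
  define W where "W = mat_of_cols n [u1, u2] * mat_diag 2 f"
  have Vmc: "Vm \<in> carrier_mat n 2" unfolding Vm_def by (rule moc2)
  have Wc: "W \<in> carrier_mat n 2" unfolding W_def
    by (rule mult_carrier_mat[OF moc2 mat_diag_dim])
  have P: "pinv Vm \<in> carrier_mat 2 n" "pinv Vm * Vm = 1\<^sub>m 2" using pinv_full[OF Vmc] inj Vm_def by auto
  have WPV: "W * pinv Vm * Vm = W" using assoc_mult_mat[OF Wc P(1) Vmc] P(2) Wc by simp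
  have WPc: "W * pinv Vm \<in> carrier_mat n n" using Wc P by auto
  have Wi: "W = Matrix.mat n 2 (\<lambda>(i,j). mat_of_cols n [u1, u2] $$ (i,j) * f j)"
    unfolding W_def by (rule mat_diag_mult_right[OF moc2])
  have cV0: "col Vm 0 = v1" and cV1: "col Vm 1 = v2" unfolding Vm_def using v1 v2 by auto
  have "(W * pinv Vm) *\<^sub>v v1 = col (W * pinv Vm * Vm) 0"
    using col_mult2[OF WPc Vmc, of 0] cV0 by simp
  also have "\<dots> = col W 0" using WPV by simp
  also have "\<dots> = f 0 \<cdot>\<^sub>v u1" unfolding Wi using u1
    by (intro eq_vecI) (auto simp: mat_of_cols_index)
  finally show "(mat_of_cols n [u1, u2] * mat_diag 2 f * pinv (mat_of_cols n [v1, v2])) *\<^sub>v v1 = f 0 \<cdot>\<^sub>v u1"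
    unfolding W_def Vm_def .
  have "(W * pinv Vm) *\<^sub>v v2 = col (W * pinv Vm * Vm) 1"
    using col_mult2[OF WPc Vmc, of 1] cV1 by simp
  also have "\<dots> = col W 1" using WPV by simp
  also have "\<dots> = f 1 \<cdot>\<^sub>v u2" unfolding Wi using u2
    by (intro eq_vecI) (auto simp: mat_of_cols_index)
  finally show "(mat_of_cols n [u1, u2] * mat_diag 2 f * pinv (mat_of_cols n [v1, v2])) *\<^sub>v v2 = f 1 \<cdot>\<^sub>v u2"
    unfolding W_def Vm_def .
  show "mat_of_cols n [u1, u2] * mat_diag 2 f * pinv (mat_of_cols n [v1, v2]) \<in> carrier_mat n n"
    using WPc unfolding W_def Vm_def .
qed



lemma vnorm_nonneg: "0 \<le> vnorm v"
  unfolding vnorm_def by (auto intro: sum_nonneg)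

lemma comp_le1: assumes "x \<in> carrier_vec k" "vnorm x = 1" "j < k"
  shows "cmod (x $ j) \<le> 1"
proof -
  have s: "(\<Sum>i<k. (cmod (x $ i))\<^sup>2) = 1"
    using assms unfolding vnorm_def by (metis carrier_vecD real_sqrt_eq_1_iff)
  have "(cmod (x $ j))\<^sup>2 \<le> (\<Sum>i<k. (cmod (x $ i))\<^sup>2)"
    using assms(3) by (intro member_le_sum) auto
  hence "(cmod (x $ j))\<^sup>2 \<le> 1\<^sup>2" using s by simp
  thus ?thesis by (rule power2_le_imp_le) simp
qed

lemma spec_bdd: fixes M :: "complex mat" assumes M: "M \<in> carrier_mat n k"
  shows "bdd_above {vnorm (M *\<^sub>v x) | x. x \<in> carrier_vec (dim_col M) \<and> vnorm x = 1}"
proof (rule bdd_aboveI)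
  fix r assume "r \<in> {vnorm (M *\<^sub>v x) | x. x \<in> carrier_vec (dim_col M) \<and> vnorm x = 1}"
  then obtain x where x: "x \<in> carrier_vec k" "vnorm x = 1" and r: "r = vnorm (M *\<^sub>v x)" using M by auto
  have ci: "cmod ((M *\<^sub>v x) $ i) \<le> (\<Sum>j\<in>{0..<k}. cmod (M $$ (i,j)))" if i: "i < n" for i
  proof -
    have "(M *\<^sub>v x) $ i = (\<Sum>j\<in>{0..<k}. M $$ (i,j) * x $ j)"
      using M x i by (auto simp: scalar_prod_def)
    hence "cmod ((M *\<^sub>v x) $ i) \<le> (\<Sum>j\<in>{0..<k}. cmod (M $$ (i,j) * x $ j))"
      by (simp add: norm_sum)
    also have "\<dots> \<le> (\<Sum>j\<in>{0..<k}. cmod (M $$ (i,j)))"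
    proof (rule sum_mono)
      fix j assume "j \<in> {0..<k}"
      hence "cmod (x $ j) \<le> 1" using comp_le1[OF x] by auto
      thus "cmod (M $$ (i,j) * x $ j) \<le> cmod (M $$ (i,j))"
        by (simp add: norm_mult mult_left_le)
    qed
    finally show ?thesis .
  qed
  have "r = sqrt (\<Sum>i<n. (cmod ((M *\<^sub>v x) $ i))\<^sup>2)" using r M unfolding vnorm_def by simp
  also have "\<dots> \<le> sqrt (\<Sum>i<n. (\<Sum>j\<in>{0..<k}. cmod (M $$ (i,j)))\<^sup>2)"
    by (intro real_sqrt_le_mono sum_mono power_mono ci) auto
  finally show "r \<le> sqrt (\<Sum>i<n. (\<Sum>j\<in>{0..<k}. cmod (M $$ (i,j)))\<^sup>2)" .
qed

lemma spec_nonneg: fixes M :: "complex mat" assumes M: "M \<in> carrier_mat n k"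
  and x0: "x0 \<in> carrier_vec k" "vnorm x0 = 1"
  shows "0 \<le> spec_norm M"
proof -
  have "vnorm (M *\<^sub>v x0) \<le> spec_norm M" unfolding spec_norm_def
    by (rule cSup_upper[OF _ spec_bdd[OF M]]) (use M x0 in auto)
  thus ?thesis using vnorm_nonneg order_trans by blast
qed

lemma spec_zero: assumes x0: "(x0 :: complex vec) \<in> carrier_vec n" "vnorm x0 = 1"
  shows "spec_norm (0\<^sub>m n n :: complex mat) = 0"
proof -
  have "{vnorm (0\<^sub>m n n *\<^sub>v x) | x :: complex vec. x \<in> carrier_vec (dim_col (0\<^sub>m n n :: complex mat)) \<and> vnorm x = 1} = {0}"
  proof -
    have z: "vnorm (0\<^sub>m n n *\<^sub>v x) = 0" if "x \<in> carrier_vec n" for x :: "complex vec"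
      using that unfolding vnorm_def by simp
    show ?thesis using z x0 by (auto intro!: exI[of _ x0])
  qed
  thus ?thesis unfolding spec_norm_def by simp
qed

lemma mp_eval_carrier: "\<forall>j\<le>m. A j \<in> carrier_mat n n \<Longrightarrow> mp_eval A m z \<in> carrier_mat n n"
  by (induction m) auto

lemma mp_eval_pert: assumes "\<forall>j\<le>m. A j \<in> carrier_mat n n" and D: "D \<in> carrier_mat n n"
  shows "mp_eval (perturb0 A D) m z = mp_eval A m z + D"
  using assms(1)
proof (induction m)
  case 0 thus ?case by (simp add: perturb0_def)
next
  case (Suc m)
  have E: "mp_eval A m z \<in> carrier_mat n n" using mp_eval_carrier[of m A n z] Suc.prems by auto
  have S: "z ^ Suc m \<cdot>\<^sub>m A (Suc m) \<in> carrier_mat n n" using Suc.prems by auto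
  have "mp_eval (perturb0 A D) (Suc m) z = (mp_eval A m z + D) + z ^ Suc m \<cdot>\<^sub>m A (Suc m)"
    using Suc by (simp add: perturb0_def)
  also have "\<dots> = (mp_eval A m z + z ^ Suc m \<cdot>\<^sub>m A (Suc m)) + D"
    using assoc_add_mat[OF E D S] comm_add_mat[OF D S] assoc_add_mat[OF E S D] by simp
  finally show ?case by simp
qed


theorem theorem2:
  fixes n m :: nat and A :: "nat \<Rightarrow> complex mat" and \<mu>1 \<mu>2 :: complex and w :: "nat \<Rightarrow> real"
    and u1 u2 v1 v2 :: "complex vec" and \<sigma>1 \<sigma>2 :: real
  assumes A_dim: "\<forall>j\<le>m. A j \<in> carrier_mat n n"
    and lead: "det (A m) \<noteq> 0"
    and mu_ne: "\<mu>1 \<noteq> \<mu>2"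
    and w_nonneg: "\<forall>j\<le>m. 0 \<le> w j"
    and w0_pos: "0 < w 0"
    and max0: "\<forall>\<gamma>::real. 0 \<le> \<gamma> \<longrightarrow> sval (Fmat n A m \<mu>1 \<mu>2 \<gamma>) (2*n - 1) \<le> sval (Fmat n A m \<mu>1 \<mu>2 0) (2*n - 1)"
    and vecs: "u1 \<in> carrier_vec n" "u2 \<in> carrier_vec n" "v1 \<in> carrier_vec n" "v2 \<in> carrier_vec n"
    and unit: "vnorm u1 = 1" "vnorm u2 = 1" "vnorm v1 = 1" "vnorm v2 = 1"
    and sig1: "\<sigma>1 = sval (mp_eval A m \<mu>1) n"
    and sig2: "\<sigma>2 = sval (mp_eval A m \<mu>2) n"
    and sv1: "mp_eval A m \<mu>1 *\<^sub>v v1 = complex_of_real \<sigma>1 \<cdot>\<^sub>v u1"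
             "mat_adjoint (mp_eval A m \<mu>1) *\<^sub>v u1 = complex_of_real \<sigma>1 \<cdot>\<^sub>v v1"
    and sv2: "mp_eval A m \<mu>2 *\<^sub>v v2 = complex_of_real \<sigma>2 \<cdot>\<^sub>v u2"
             "mat_adjoint (mp_eval A m \<mu>2) *\<^sub>v u2 = complex_of_real \<sigma>2 \<cdot>\<^sub>v v2"
    and indep: "\<forall>a b :: complex. a \<cdot>\<^sub>v v1 + b \<cdot>\<^sub>v v2 = 0\<^sub>v n \<longrightarrow> a = 0 \<and> b = 0"
  defines "\<Delta>0 \<equiv> - (mat_of_cols n [u1, u2]
                    * mat_diag 2 (\<lambda>i. if i = 0 then complex_of_real \<sigma>1 else complex_of_real \<sigma>2)
                    * pinv (mat_of_cols n [v1, v2]))"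
  shows "on_mp_ball_boundary n m A (spec_norm \<Delta>0 / w 0) w (perturb0 A \<Delta>0)
         \<and> mp_eigenpair n m (perturb0 A \<Delta>0) \<mu>1 v1 \<and> mp_eigenpair n m (perturb0 A \<Delta>0) \<mu>2 v2"
proof -
  have Vinj: "\<forall>c\<in>carrier_vec 2. mat_of_cols n [v1, v2] *\<^sub>v c = 0\<^sub>v n \<longrightarrow> c = 0\<^sub>v 2"
    using indep_inj[OF vecs(3,4) indep] .
  define f where "f = (\<lambda>i::nat. if i = 0 then complex_of_real \<sigma>1 else complex_of_real \<sigma>2)"
  define Mx where "Mx = mat_of_cols n [u1, u2] * mat_diag 2 f * pinv (mat_of_cols n [v1, v2])"
  have KA: "Mx *\<^sub>v v1 = complex_of_real \<sigma>1 \<cdot>\<^sub>v u1" "Mx *\<^sub>v v2 = complex_of_real \<sigma>2 \<cdot>\<^sub>v u2"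
    "Mx \<in> carrier_mat n n"
    using key_action[OF vecs Vinj, of f] unfolding Mx_def f_def by auto
  have D: "\<Delta>0 = - Mx" unfolding \<Delta>0_def Mx_def f_def by simp
  have Dc: "\<Delta>0 \<in> carrier_mat n n" using D KA(3) by auto
  have Dv1: "\<Delta>0 *\<^sub>v v1 = - (complex_of_real \<sigma>1 \<cdot>\<^sub>v u1)" using D KA vecs by simp
  have Dv2: "\<Delta>0 *\<^sub>v v2 = - (complex_of_real \<sigma>2 \<cdot>\<^sub>v u2)" using D KA vecs by simp
  have nz: "v \<noteq> 0\<^sub>v n" if "v = v1 \<or> v = v2" for v
  proof
    assume v0: "v = 0\<^sub>v n"
    show False
    proof (cases "v = v1")
      case True
      have "1 \<cdot>\<^sub>v v1 + 0 \<cdot>\<^sub>v v2 = 0\<^sub>v n" using True v0 vecs by auto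
      thus False using indep by fastforce
    next
      case False
      hence "v = v2" using that by auto
      have "0 \<cdot>\<^sub>v v1 + 1 \<cdot>\<^sub>v v2 = 0\<^sub>v n" using \<open>v = v2\<close> v0 vecs by auto
      thus False using indep by fastforce
    qed
  qed
  have eig: "mp_eigenpair n m (perturb0 A \<Delta>0) \<mu> v"
    if v: "v \<in> carrier_vec n" "v \<noteq> 0\<^sub>v n" and Pv: "mp_eval A m \<mu> *\<^sub>v v = complex_of_real \<sigma> \<cdot>\<^sub>v u"
      and Dv: "\<Delta>0 *\<^sub>v v = - (complex_of_real \<sigma> \<cdot>\<^sub>v u)" and u: "u \<in> carrier_vec n" for \<mu> v u \<sigma>
  proof -
    have Pc: "mp_eval A m \<mu> \<in> carrier_mat n n" using mp_eval_carrier A_dim by blast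
    have Q: "mp_eval (perturb0 A \<Delta>0) m \<mu> = mp_eval A m \<mu> + \<Delta>0" using mp_eval_pert[OF A_dim Dc] .
    have Qc: "mp_eval (perturb0 A \<Delta>0) m \<mu> \<in> carrier_mat n n" using Q Pc Dc by auto
    have Qv: "mp_eval (perturb0 A \<Delta>0) m \<mu> *\<^sub>v v = 0\<^sub>v n"
    proof -
      have "mp_eval (perturb0 A \<Delta>0) m \<mu> *\<^sub>v v = mp_eval A m \<mu> *\<^sub>v v + \<Delta>0 *\<^sub>v v"
        unfolding Q using add_mult_distrib_mat_vec[OF Pc Dc v(1)] .
      also have "\<dots> = complex_of_real \<sigma> \<cdot>\<^sub>v u + - (complex_of_real \<sigma> \<cdot>\<^sub>v u)" using Pv Dv by simp
      also have "\<dots> = 0\<^sub>v n" using u by (intro eq_vecI) auto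
      finally show ?thesis .
    qed
    have "det (mp_eval (perturb0 A \<Delta>0) m \<mu>) = 0"
      using det_0_iff_vec_prod_zero[OF Qc] v Qv by blast
    thus ?thesis unfolding mp_eigenpair_def using v Qv by auto
  qed
  have E1: "mp_eigenpair n m (perturb0 A \<Delta>0) \<mu>1 v1"
    by (rule eig[OF vecs(3) nz sv1(1) Dv1 vecs(1)]) simp
  have E2: "mp_eigenpair n m (perturb0 A \<Delta>0) \<mu>2 v2"
    by (rule eig[OF vecs(4) nz sv2(1) Dv2 vecs(2)]) simp
  have sn0: "0 \<le> spec_norm \<Delta>0" using spec_nonneg[OF Dc vecs(3) unit(3)] .
  have sz: "spec_norm (0\<^sub>m n n :: complex mat) = 0" using spec_zero[OF vecs(3) unit(3)] .
  define \<epsilon> where "\<epsilon> = spec_norm \<Delta>0 / w 0"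
  have eps0: "0 \<le> \<epsilon>" unfolding \<epsilon>_def using sn0 w0_pos by simp
  have eq0: "spec_norm \<Delta>0 = \<epsilon> * w 0" unfolding \<epsilon>_def using w0_pos by simp
  define Dl where "Dl = (\<lambda>j::nat. if j = 0 then \<Delta>0 else 0\<^sub>m n n)"
  have B: "on_mp_ball_boundary n m A \<epsilon> w (perturb0 A \<Delta>0)"
    unfolding on_mp_ball_boundary_def
  proof (intro exI[of _ Dl] conjI allI impI)
    fix j assume j: "j \<le> m"
    show "Dl j \<in> carrier_mat n n" using Dc unfolding Dl_def by auto
    show "spec_norm (Dl j) \<le> \<epsilon> * w j"
      using eq0 sz eps0 w_nonneg j unfolding Dl_def by auto
    show "perturb0 A \<Delta>0 j = A j + Dl j"
      using A_dim j unfolding Dl_def perturb0_def by auto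
  next
    show "\<exists>j\<le>m. spec_norm (Dl j) = \<epsilon> * w j" using eq0 unfolding Dl_def by (intro exI[of _ 0]) auto
  qed
  show ?thesis using B E1 E2 unfolding \<epsilon>_def by simp
qed

end
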